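(* Let $w_0\in W_0\subseteq W$, $r\in\mathbb Z_{\ge0}$, let $\overline{\mathfrak c}$ be a closed Weyl chamber in $V_{\mathscr A}$, let $x_1,\dots,x_r\in T/T^0$ with $\nu(x_i)\in\overline{\mathfrak c}$ for all $i$, let $n_i,m_i\in\mathbb Z_{\ge0}$ ($1\le i\le r$) with $m_i>0\Rightarrow n_i>0$, and let $\alpha\in\Phi$. Then at least one of the following holds: (1) $g_{w_0x_1^{n_1+m_1}\cdots x_r^{n_r+m_r}}(\alpha)=g_{w_0x_1^{n_1}\cdots x_r^{n_r}}(\alpha)$; (2) $g_{w_0x_1^{n_1+m_1}\cdots x_r^{n_r+m_r}}(\alpha)=g_{w_0x_1^{n_1}\cdots x_r^{n_r}}(\alpha)-\langle\nu(x_1^{m_1}\cdots x_r^{m_r}),w_0^{-1}\alpha\rangle$.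
   Context: Setting: $\mathfrak F$ a non-archimedean local field with valuation $\mathrm{val}_{\mathfrak F}$, $\mathbf G$ a connected split reductive group over $\mathfrak F$ with split maximal torus $\mathbf T$, connected centre $\mathbf C^\circ$, root system $\Phi$ with positive roots $\Phi^+$. $T=\mathbf T(\mathfrak F)$, $T^0$ its maximal compact subgroup, $N$ the normalizer of $T$, $W_0=N/T$, $W=N/T^0=(T/T^0)\rtimes W_0$ (with $W_0\subseteq W$ via the splitting coming from a fixed Chevalley system). $V_{\mathscr A}=(X_\ast(\mathbf T)/X_\ast(\mathbf C^\circ))\otimes\mathbb R$; $\nu:T/T^0\to V_{\mathscr A}$ satisfies $\langle\nu(t),\alpha\rangle=-\mathrm{val}_{\mathfrak F}(\alpha(t))$. Affine roots $\Phi_{\mathrm{aff}}=\Phi\times\mathbb Z$, positive ones $\Phi^+_{\mathrm{aff}}=(\Phi\times\mathbb Z_{\ge1})\cup(\Phi^+\times\{0\})$; $W$ acts by $(w_0t)\cdot(\alpha,h)=(w_0\alpha,h-\langle\nu(t),\alpha\rangle)$. For $w\in W$ and $\alpha\in\Phi$ define $g_w(\alpha)=\min\{m\in\mathbb Z:(\alpha,m)\in\Phi^+_{\mathrm{aff}}\cap w\Phi^+_{\mathrm{aff}}\}$. *)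

theory Defs
  imports "HOL-Analysis.Analysis" "HOL-Algebra.FiniteProduct"
begin

text \<open>The real vector space V_A carries a W_0-invariant inner product; we identify its
  dual with V_A via this inner product, so roots are vectors and the pairing
  between V_A and roots is the inner product.\<close>

definition root_refl :: "'v::real_inner \<Rightarrow> 'v \<Rightarrow> 'v" where
  "root_refl a v = v - (2 * (v \<bullet> a) / (a \<bullet> a)) *\<^sub>R a"

definition root_system :: "'v::euclidean_space set \<Rightarrow> bool" where
  "root_system \<Phi> \<longleftrightarrow> finite \<Phi> \<and> 0 \<notin> \<Phi> \<and> span \<Phi> = UNIV
     \<and> (\<forall>a\<in>\<Phi>. \<forall>b\<in>\<Phi>. root_refl a b \<in> \<Phi> \<and> 2 * (b \<bullet> a) / (a \<bullet> a) \<in> \<int>)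
     \<and> (\<forall>a\<in>\<Phi>. \<forall>c. c *\<^sub>R a \<in> \<Phi> \<longrightarrow> c = 1 \<or> c = -1)"

definition positive_system :: "'v::euclidean_space set \<Rightarrow> 'v set \<Rightarrow> bool" where
  "positive_system \<Phi> P \<longleftrightarrow>
     (\<exists>\<xi>. (\<forall>a\<in>\<Phi>. \<xi> \<bullet> a \<noteq> 0) \<and> P = {a\<in>\<Phi>. \<xi> \<bullet> a > 0})"

inductive_set weyl_group :: "'v::real_inner set \<Rightarrow> ('v \<Rightarrow> 'v) set" for \<Phi> where
  weyl_id: "id \<in> weyl_group \<Phi>"
| weyl_step: "w \<in> weyl_group \<Phi> \<Longrightarrow> a \<in> \<Phi> \<Longrightarrow> root_refl a \<circ> w \<in> weyl_group \<Phi>"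

definition closed_weyl_chamber :: "'v::euclidean_space set \<Rightarrow> 'v set \<Rightarrow> bool" where
  "closed_weyl_chamber \<Phi> C \<longleftrightarrow>
     (\<exists>\<xi>. (\<forall>a\<in>\<Phi>. \<xi> \<bullet> a \<noteq> 0) \<and>
        C = closure (connected_component_set (- (\<Union>a\<in>\<Phi>. {v. v \<bullet> a = 0})) \<xi>))"

text \<open>Affine roots Phi x Z are represented as pairs (a, h) with h a real number that is an
  integer; positive affine roots.\<close>
definition pos_aff :: "'v set \<Rightarrow> 'v set \<Rightarrow> ('v \<times> real) set" where
  "pos_aff \<Phi> P = {(a, real_of_int h) | a h. a \<in> \<Phi> \<and> (h \<ge> 1 \<or> (h = 0 \<and> a \<in> P))}"

text \<open>Action of w = w0 t (w0 in W_0, t in T/T^0) on affine roots: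
  (w0 t).(a,h) = (w0 a, h - <nu t, a>).\<close>
definition aff_act :: "('t \<Rightarrow> 'v::real_inner) \<Rightarrow> ('v \<Rightarrow> 'v) \<Rightarrow> 't \<Rightarrow> 'v \<times> real \<Rightarrow> 'v \<times> real" where
  "aff_act \<nu> w0 t ah = (w0 (fst ah), snd ah - \<nu> t \<bullet> fst ah)"

definition gW :: "'v::real_inner set \<Rightarrow> 'v set \<Rightarrow> ('t \<Rightarrow> 'v) \<Rightarrow> ('v \<Rightarrow> 'v) \<Rightarrow> 't \<Rightarrow> 'v \<Rightarrow> int" where
  "gW \<Phi> P \<nu> w0 t a =
     (LEAST m::int. (a, real_of_int m) \<in> pos_aff \<Phi> P \<inter> aff_act \<nu> w0 t ` pos_aff \<Phi> P)"

end

theory Submission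
  imports Defs
begin

lemma root_refl_invol:
  assumes "a \<noteq> (0::'v::real_inner)"
  shows "root_refl a (root_refl a v) = v"
proof -
  have aa: "a \<bullet> a \<noteq> 0" using assms by simp
  define k where "k = 2 * (v \<bullet> a) / (a \<bullet> a)"
  have "(v - k *\<^sub>R a) \<bullet> a = - (v \<bullet> a)"
    using aa by (simp add: k_def inner_diff_left algebra_simps)
  hence "2 * ((v - k *\<^sub>R a) \<bullet> a) / (a \<bullet> a) = - k" by (simp add: k_def)
  thus ?thesis unfolding root_refl_def k_def[symmetric] by simp
qed

lemma weyl_props:
  assumes "w \<in> weyl_group \<Phi>" "root_system \<Phi>"
  shows "inj w \<and> w ` \<Phi> = \<Phi>"
  using assms(1)
proof induction
  case weyl_id then show ?case by simp
next
  case (weyl_step w a)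
  have a0: "a \<noteq> 0" using weyl_step assms(2) unfolding root_system_def by auto
  have inv: "\<And>v. root_refl a (root_refl a v) = v" using root_refl_invol[OF a0] .
  have injr: "inj (root_refl a)" by (metis inv injI)
  have sub: "root_refl a ` \<Phi> \<subseteq> \<Phi>" using weyl_step assms(2) unfolding root_system_def by auto
  have "root_refl a ` \<Phi> = \<Phi>"
  proof
    show "\<Phi> \<subseteq> root_refl a ` \<Phi>"
    proof
      fix b assume "b \<in> \<Phi>"
      then have "root_refl a b \<in> \<Phi>" using sub by auto
      then show "b \<in> root_refl a ` \<Phi>" using inv[of b] by (metis image_eqI)
    qed
  qed (rule sub)
  moreover have "(root_refl a \<circ> w) ` \<Phi> = root_refl a ` (w ` \<Phi>)" by (simp only: image_comp)
  ultimately have "(root_refl a \<circ> w) ` \<Phi> = \<Phi>" using weyl_step by simp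
  moreover have "inj (root_refl a \<circ> w)" using weyl_step injr by (simp add: inj_compose)
  ultimately show ?case by blast
qed

lemma nu_one:
  assumes "monoid X" "\<forall>s\<in>carrier X. \<forall>t\<in>carrier X. \<nu> (s \<otimes>\<^bsub>X\<^esub> t) = \<nu> s + (\<nu> t :: 'v::real_vector)"
  shows "\<nu> \<one>\<^bsub>X\<^esub> = 0"
proof -
  have "\<nu> (\<one>\<^bsub>X\<^esub> \<otimes>\<^bsub>X\<^esub> \<one>\<^bsub>X\<^esub>) = \<nu> \<one>\<^bsub>X\<^esub> + \<nu> \<one>\<^bsub>X\<^esub>"
    using assms(2) monoid.one_closed[OF assms(1)] by blast
  moreover have "\<one>\<^bsub>X\<^esub> \<otimes>\<^bsub>X\<^esub> \<one>\<^bsub>X\<^esub> = \<one>\<^bsub>X\<^esub>" using assms(1) by (simp add: monoid.l_one monoid.one_closed)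
  ultimately show ?thesis by simp
qed

lemma nu_pow:
  assumes "monoid X" "\<forall>s\<in>carrier X. \<forall>t\<in>carrier X. \<nu> (s \<otimes>\<^bsub>X\<^esub> t) = \<nu> s + (\<nu> t :: 'v::real_vector)"
    "y \<in> carrier X"
  shows "\<nu> (y [^]\<^bsub>X\<^esub> (k::nat)) = real k *\<^sub>R \<nu> y"
proof (induction k)
  case 0 then show ?case using nu_one[OF assms(1,2)] by simp
next
  case (Suc k)
  have "y [^]\<^bsub>X\<^esub> k \<in> carrier X" using assms by (simp add: monoid.nat_pow_closed)
  then show ?case using Suc assms by (simp add: algebra_simps)
qed

lemma nu_finprod:
  assumes "comm_monoid X" "\<forall>s\<in>carrier X. \<forall>t\<in>carrier X. \<nu> (s \<otimes>\<^bsub>X\<^esub> t) = \<nu> s + (\<nu> t :: 'v::real_vector)"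
    "finite A" "f \<in> A \<rightarrow> carrier X"
  shows "\<nu> (finprod X f A) = (\<Sum>i\<in>A. \<nu> (f i))"
  using assms(3,4)
proof (induction A rule: finite_induct)
  case empty then show ?case using nu_one[OF comm_monoid.axioms(1)[OF assms(1)] assms(2)]
    by (simp add: comm_monoid.finprod_empty[OF assms(1)])
next
  case (insert a F)
  have fF: "f \<in> F \<rightarrow> carrier X" using insert by auto
  have fa: "f a \<in> carrier X" using insert by auto
  have "finprod X f (insert a F) = f a \<otimes>\<^bsub>X\<^esub> finprod X f F"
    using comm_monoid.finprod_insert[OF assms(1) insert(1,2) fF fa] .
  moreover have "finprod X f F \<in> carrier X" using comm_monoid.finprod_closed[OF assms(1) fF] .
  ultimately show ?case using insert fF fa assms(2) by simp
qed

lemma least_max: "(LEAST m::int. a \<le> m \<and> b \<le> m) = max a b"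
  by (rule Least_equality) auto

lemma gW_eq:
  assumes inj: "inj w0" and "\<beta> \<in> \<Phi>" "w0 \<beta> = \<alpha>" "\<alpha> \<in> \<Phi>" and c: "\<nu> t \<bullet> \<beta> = real_of_int c"
  shows "gW \<Phi> P \<nu> w0 t \<alpha> = max (if \<alpha> \<in> P then 0 else 1) ((if \<beta> \<in> P then 0 else 1) - c)"
proof -
  have A: "(\<alpha>, real_of_int m) \<in> pos_aff \<Phi> P \<longleftrightarrow> (if \<alpha> \<in> P then 0 else 1) \<le> m" for m
    using assms(4) unfolding pos_aff_def by auto
  have B: "(\<alpha>, real_of_int m) \<in> aff_act \<nu> w0 t ` pos_aff \<Phi> P \<longleftrightarrow> (if \<beta> \<in> P then 0 else 1) - c \<le> m" for m
  proof
    assume "(\<alpha>, real_of_int m) \<in> aff_act \<nu> w0 t ` pos_aff \<Phi> P"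
    then obtain a h where ah: "a \<in> \<Phi>" "h \<ge> 1 \<or> (h = 0 \<and> a \<in> P)"
      "(\<alpha>, real_of_int m) = (w0 a, real_of_int h - \<nu> t \<bullet> a)"
      unfolding pos_aff_def aff_act_def by force
    have "a = \<beta>" using ah(3) assms inj by (metis injD prod.inject)
    then have "m = h - c" using ah(3) c by auto
    then show "(if \<beta> \<in> P then 0 else 1) - c \<le> m" using ah \<open>a = \<beta>\<close> by auto
  next
    assume H: "(if \<beta> \<in> P then 0 else 1) - c \<le> m"
    have "(\<beta>, real_of_int (m + c)) \<in> pos_aff \<Phi> P"
      using H assms(2) unfolding pos_aff_def by (auto split: if_splits intro!: exI[of _ "m+c"])
    moreover have "aff_act \<nu> w0 t (\<beta>, real_of_int (m + c)) = (\<alpha>, real_of_int m)"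
      using assms c unfolding aff_act_def by simp
    ultimately show "(\<alpha>, real_of_int m) \<in> aff_act \<nu> w0 t ` pos_aff \<Phi> P" by (metis image_eqI)
  qed
  show ?thesis unfolding gW_def using A B least_max by simp
qed

lemma arith_main:
  fixes e :: "nat \<Rightarrow> int" and n m :: "nat \<Rightarrow> nat" and ea eb :: int
  assumes "finite I" "(\<forall>i\<in>I. e i \<ge> 0) \<or> (\<forall>i\<in>I. e i \<le> 0)" "\<forall>i\<in>I. m i > 0 \<longrightarrow> n i > 0"
    "0 \<le> ea" "ea \<le> 1" "0 \<le> eb" "eb \<le> 1"
  defines "c \<equiv> (\<Sum>i\<in>I. int (n i) * e i)" and "d \<equiv> (\<Sum>i\<in>I. int (m i) * e i)"
  shows "max ea (eb - (c + d)) = max ea (eb - c) \<or> max ea (eb - (c + d)) = max ea (eb - c) - d"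
proof (cases "d = 0")
  case True then show ?thesis by simp
next
  case False
  then obtain i where i: "i \<in> I" "int (m i) * e i \<noteq> 0" unfolding d_def
    by (meson sum.neutral)
  then have mi: "m i > 0" "e i \<noteq> 0" by auto
  then have ni: "n i > 0" using assms(3) i by auto
  show ?thesis using assms(2)
  proof
    assume pos: "\<forall>i\<in>I. e i \<ge> 0"
    have "d \<ge> 0" unfolding d_def using pos by (auto intro: sum_nonneg)
    have "int (n i) * e i \<ge> 1" using pos i mi ni by (smt (verit) mult_pos_pos of_nat_0_less_iff)
    moreover have "int (n i) * e i \<le> c" unfolding c_def
      by (rule member_le_sum) (use pos i assms(1) in auto)
    ultimately show ?thesis using \<open>d \<ge> 0\<close> assms by auto
  next
    assume neg: "\<forall>i\<in>I. e i \<le> 0"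
    have "d \<le> 0" unfolding d_def using neg by (auto intro: sum_nonpos simp: mult_nonneg_nonpos)
    have "int (n i) * e i \<le> -1" using neg i mi ni
      by (smt (verit) mult_pos_neg of_nat_0_less_iff)
    moreover have "c \<le> int (n i) * e i"
    proof -
      have "c = int (n i) * e i + (\<Sum>j\<in>I-{i}. int (n j) * e j)"
        unfolding c_def using i assms(1) by (simp add: sum.remove)
      moreover have "(\<Sum>j\<in>I-{i}. int (n j) * e j) \<le> 0"
        using neg by (auto intro: sum_nonpos simp: mult_nonneg_nonpos)
      ultimately show ?thesis by simp
    qed
    ultimately show ?thesis using \<open>d \<le> 0\<close> assms False by auto
  qed
qed

lemma chamber_sign:
  assumes "closed_weyl_chamber \<Phi> C" "\<beta> \<in> \<Phi>"
  shows "\<exists>s::real. s \<noteq> 0 \<and> (\<forall>v\<in>C. 0 \<le> s * (v \<bullet> \<beta>))"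
proof -
  obtain \<xi> where xi: "\<forall>a\<in>\<Phi>. \<xi> \<bullet> a \<noteq> 0"
    and C: "C = closure (connected_component_set (- (\<Union>a\<in>\<Phi>. {v. v \<bullet> a = 0})) \<xi>)"
    using assms(1) unfolding closed_weyl_chamber_def by blast
  define U where "U = - (\<Union>a\<in>\<Phi>. {v. v \<bullet> a = 0})"
  define S where "S = connected_component_set U \<xi>"
  define s where "s = \<xi> \<bullet> \<beta>"
  have s0: "s \<noteq> 0" using xi assms(2) s_def by auto
  have xiU: "\<xi> \<in> U" using xi U_def by auto
  have xiS: "\<xi> \<in> S" using xiU S_def connected_component_refl by (metis mem_Collect_eq)
  have conS: "connected S" using S_def by simp
  have SU: "S \<subseteq> U" using S_def connected_component_subset by metis
  have nz: "z \<in> S \<Longrightarrow> \<beta> \<bullet> z \<noteq> 0" for z using SU assms(2) U_def by (auto simp: inner_commute)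
  have "S \<subseteq> {v. 0 \<le> s * (v \<bullet> \<beta>)}"
  proof
    fix v assume v: "v \<in> S"
    show "v \<in> {v. 0 \<le> s * (v \<bullet> \<beta>)}"
    proof (rule ccontr)
      assume "v \<notin> {v. 0 \<le> s * (v \<bullet> \<beta>)}"
      then have neg: "s * (v \<bullet> \<beta>) < 0" by simp
      show False
      proof (cases "s > 0")
        case True
        then have "\<beta> \<bullet> v \<le> 0" "0 \<le> \<beta> \<bullet> \<xi>" using neg s_def
          by (auto simp: inner_commute mult_less_0_iff)
        then obtain z where "z \<in> S" "\<beta> \<bullet> z = 0" using connected_ivt_hyperplane[OF conS v xiS] by blast
        then show False using nz by blast
      next
        case False
        then have "\<beta> \<bullet> \<xi> \<le> 0" "0 \<le> \<beta> \<bullet> v" using neg s_def s0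
          by (auto simp: inner_commute mult_less_0_iff)
        then obtain z where "z \<in> S" "\<beta> \<bullet> z = 0" using connected_ivt_hyperplane[OF conS xiS v] by blast
        then show False using nz by blast
      qed
    qed
  qed
  moreover have "closed {v. 0 \<le> s * (v \<bullet> \<beta>)}"
    by (intro closed_Collect_le continuous_intros)
  ultimately have "closure S \<subseteq> {v. 0 \<le> s * (v \<bullet> \<beta>)}" by (rule closure_minimal)
  then show ?thesis using s0 C S_def U_def by auto
qed

theorem mainTheorem3:
  fixes \<Phi> P :: "'v::euclidean_space set" and X :: "'x monoid" and \<nu> :: "'x \<Rightarrow> 'v"
    and w0 :: "'v \<Rightarrow> 'v" and r :: nat and C :: "'v set" and x :: "nat \<Rightarrow> 'x"
    and n m :: "nat \<Rightarrow> nat" and \<alpha> :: 'v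
  assumes "root_system \<Phi>" and "positive_system \<Phi> P"
    and "comm_group X"
    and "\<forall>s\<in>carrier X. \<forall>t\<in>carrier X. \<nu> (s \<otimes>\<^bsub>X\<^esub> t) = \<nu> s + \<nu> t"
    and "\<forall>t\<in>carrier X. \<forall>a\<in>\<Phi>. \<nu> t \<bullet> a \<in> \<int>"
    and "w0 \<in> weyl_group \<Phi>"
    and "closed_weyl_chamber \<Phi> C"
    and "\<forall>i\<in>{1..r}. x i \<in> carrier X \<and> \<nu> (x i) \<in> C"
    and "\<forall>i\<in>{1..r}. m i > 0 \<longrightarrow> n i > 0"
    and "\<alpha> \<in> \<Phi>"
  shows "gW \<Phi> P \<nu> w0 (finprod X (\<lambda>i. x i [^]\<^bsub>X\<^esub> (n i + m i)) {1..r}) \<alpha>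
           = gW \<Phi> P \<nu> w0 (finprod X (\<lambda>i. x i [^]\<^bsub>X\<^esub> n i) {1..r}) \<alpha>
      \<or> real_of_int (gW \<Phi> P \<nu> w0 (finprod X (\<lambda>i. x i [^]\<^bsub>X\<^esub> (n i + m i)) {1..r}) \<alpha>)
           = real_of_int (gW \<Phi> P \<nu> w0 (finprod X (\<lambda>i. x i [^]\<^bsub>X\<^esub> n i) {1..r}) \<alpha>)
             - \<nu> (finprod X (\<lambda>i. x i [^]\<^bsub>X\<^esub> m i) {1..r}) \<bullet> inv_into UNIV w0 \<alpha>"
proof -
  note A = assms
  have cm: "comm_monoid X" using A(3) comm_group.axioms(1) by blast
  have mo: "monoid X" using cm comm_monoid.axioms(1) by blast
  have wp: "inj w0 \<and> w0 ` \<Phi> = \<Phi>" using weyl_props[OF A(6) A(1)] .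
  define \<beta> where "\<beta> = inv_into UNIV w0 \<alpha>"
  obtain b where b: "b \<in> \<Phi>" "\<alpha> = w0 b" using wp A(10) by blast
  have bb: "\<beta> = b" using b wp \<beta>_def by (simp add: inv_into_f_f)
  have \<beta>\<Phi>: "\<beta> \<in> \<Phi>" and w\<beta>: "w0 \<beta> = \<alpha>" using b bb by auto
  have car: "\<forall>i\<in>{1..r}. x i \<in> carrier X" using A(8) by blast
  define e where "e i = floor (\<nu> (x i) \<bullet> \<beta>)" for i
  have he: "\<nu> (x i) \<bullet> \<beta> = of_int (e i)" if "i \<in> {1..r}" for i
  proof -
    have "\<nu> (x i) \<bullet> \<beta> \<in> \<int>" using A(5) car that \<beta>\<Phi> by blast
    then show ?thesis unfolding e_def by (metis Ints_cases floor_of_int)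
  qed
  have key: "\<nu> (finprod X (\<lambda>i. x i [^]\<^bsub>X\<^esub> k i) {1..r}) \<bullet> \<beta>
      = of_int (\<Sum>i\<in>{1..r}. int (k i) * e i)" for k :: "nat \<Rightarrow> nat"
  proof -
    have f: "(\<lambda>i. x i [^]\<^bsub>X\<^esub> k i) \<in> {1..r} \<rightarrow> carrier X"
      using car mo by (auto simp: monoid.nat_pow_closed)
    have "\<nu> (finprod X (\<lambda>i. x i [^]\<^bsub>X\<^esub> k i) {1..r}) = (\<Sum>i\<in>{1..r}. \<nu> (x i [^]\<^bsub>X\<^esub> k i))"
      using nu_finprod[OF cm A(4) _ f] by simp
    also have "\<dots> = (\<Sum>i\<in>{1..r}. real (k i) *\<^sub>R \<nu> (x i))"
      using nu_pow[OF mo A(4)] car by (intro sum.cong) auto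
    finally have "\<nu> (finprod X (\<lambda>i. x i [^]\<^bsub>X\<^esub> k i) {1..r}) \<bullet> \<beta>
        = (\<Sum>i\<in>{1..r}. real (k i) * (\<nu> (x i) \<bullet> \<beta>))"
      by (simp add: inner_sum_left)
    also have "\<dots> = (\<Sum>i\<in>{1..r}. of_int (int (k i) * e i))"
      using he by (intro sum.cong) auto
    finally show ?thesis by simp
  qed
  define ea :: int where "ea = (if \<alpha> \<in> P then 0 else 1)"
  define eb :: int where "eb = (if \<beta> \<in> P then 0 else 1)"
  define c where "c = (\<Sum>i\<in>{1..r}. int (n i) * e i)"
  define d where "d = (\<Sum>i\<in>{1..r}. int (m i) * e i)"
  have cd: "(\<Sum>i\<in>{1..r}. int (n i + m i) * e i) = c + d"
    unfolding c_def d_def by (simp add: sum.distrib algebra_simps)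
  have k1: "\<nu> (finprod X (\<lambda>i. x i [^]\<^bsub>X\<^esub> (n i + m i)) {1..r}) \<bullet> \<beta> = of_int (c + d)"
  proof -
    have "\<nu> (finprod X (\<lambda>i. x i [^]\<^bsub>X\<^esub> (n i + m i)) {1..r}) \<bullet> \<beta>
       = of_int (\<Sum>i\<in>{1..r}. int (n i + m i) * e i)" by (rule key)
    then show ?thesis by (simp only: cd)
  qed
  have k2: "\<nu> (finprod X (\<lambda>i. x i [^]\<^bsub>X\<^esub> n i) {1..r}) \<bullet> \<beta> = of_int c"
    unfolding c_def by (rule key)
  have g1: "gW \<Phi> P \<nu> w0 (finprod X (\<lambda>i. x i [^]\<^bsub>X\<^esub> (n i + m i)) {1..r}) \<alpha> = max ea (eb - (c + d))"
    unfolding ea_def eb_def by (rule gW_eq[where \<nu>=\<nu> and t="finprod X (\<lambda>i. x i [^]\<^bsub>X\<^esub> (n i + m i)) {1..r}", OF conjunct1[OF wp] \<beta>\<Phi> w\<beta> A(10) k1])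
  have g2: "gW \<Phi> P \<nu> w0 (finprod X (\<lambda>i. x i [^]\<^bsub>X\<^esub> n i) {1..r}) \<alpha> = max ea (eb - c)"
    unfolding ea_def eb_def by (rule gW_eq[where \<nu>=\<nu> and t="finprod X (\<lambda>i. x i [^]\<^bsub>X\<^esub> n i) {1..r}", OF conjunct1[OF wp] \<beta>\<Phi> w\<beta> A(10) k2])
  have g3: "\<nu> (finprod X (\<lambda>i. x i [^]\<^bsub>X\<^esub> m i) {1..r}) \<bullet> inv_into UNIV w0 \<alpha> = of_int d"
    using key[of m] unfolding d_def \<beta>_def by simp
  obtain s :: real where s: "s \<noteq> 0" "\<forall>v\<in>C. 0 \<le> s * (v \<bullet> \<beta>)"
    using chamber_sign[OF A(7) \<beta>\<Phi>] by blast
  have sign: "(\<forall>i\<in>{1..r}. e i \<ge> 0) \<or> (\<forall>i\<in>{1..r}. e i \<le> 0)"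
  proof (cases "s > 0")
    case True
    have "\<forall>i\<in>{1..r}. e i \<ge> 0"
    proof
      fix i assume i: "i \<in> {1..r}"
      have "0 \<le> s * of_int (e i)" using s A(8) i he[OF i] by metis
      then show "e i \<ge> 0" using True by (simp add: zero_le_mult_iff)
    qed
    then show ?thesis by blast
  next
    case False
    then have sn: "s < 0" using s(1) by simp
    have "\<forall>i\<in>{1..r}. e i \<le> 0"
    proof
      fix i assume i: "i \<in> {1..r}"
      have "0 \<le> s * of_int (e i)" using s A(8) i he[OF i] by metis
      then show "e i \<le> 0" using sn by (simp add: zero_le_mult_iff)
    qed
    then show ?thesis by blast
  qed
  have "max ea (eb - (c + d)) = max ea (eb - c) \<or> max ea (eb - (c + d)) = max ea (eb - c) - d"
    using arith_main[of "{1..r}" e m n ea eb] sign A(9)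
    unfolding c_def d_def ea_def eb_def by simp
  then show ?thesis using g1 g2 g3 by auto
qed

end
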